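(* Let $\mathbb{E},\mathbb{F}$ be finite-dimensional real inner-product spaces, $K\subseteq\mathbb{E}$ a pointed closed convex cone with nonempty interior, $\mathcal{A}\colon\mathbb{E}\to\mathbb{F}^*$ linear, $c\in\mathbb{E}^*$, $b\in\mathbb{F}^*$. Set $\mathcal{C}_P:=\{x\in K : \mathcal{A}(x)=b\}$ and $\mathcal{C}_D:=\{s\in K^* : s\in\operatorname{Im}(\mathcal{A}^* )-c\}$. Suppose $\mathcal{C}_P\cap\operatorname{int}(K)\neq\emptyset$ and let $\bar x\in\mathcal{C}_P$. Then there exists $\bar s\in\mathcal{C}_D$ such that $(\bar x,\bar s)$ is strictly complementary if and only if $c\in\operatorname{relint}(N_{\mathcal{C}_P}(\bar x))$.
   Context: $K^*:=\{s\in\mathbb{E}^*:\langle s,x\rangle\ge0\ \forall x\in K\}$. A pair $(\bar x,\bar s)\in\mathcal{C}_P\times\mathcal{C}_D$ is strictly complementary if there is a face $F$ of $K$ with $\bar x\in\operatorname{relint}(F)$ and $\bar s\in\operatorname{relint}(F^{\triangle})$, where $F^{\triangle}:=K^*\cap F^\perp$ is the conjugate face. The normal cone of a convex set $\mathcal{C}$ at $\bar x\in\mathcal{C}$ is $N_{\mathcal{C}}(\bar x):=\{c\in\mathbb{E}^* : \langle c,x\rangle\le\langle c,\bar x\rangle\ \forall x\in\mathcal{C}\}$; $\operatorname{relint}$ is the relative interior. *)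

theory Defs
  imports "HOL-Analysis.Analysis"
begin

text \<open>Dual spaces are identified with the spaces themselves via the inner product
  (finite-dimensional real inner-product spaces = euclidean_space).\<close>

definition dual_cone :: "'a::real_inner set \<Rightarrow> 'a set" where
  "dual_cone K = {s. \<forall>x\<in>K. s \<bullet> x \<ge> 0}"

definition conjugate_face :: "'a::real_inner set \<Rightarrow> 'a set \<Rightarrow> 'a set" where
  "conjugate_face K F = dual_cone K \<inter> {s. \<forall>x\<in>F. s \<bullet> x = 0}"

definition normal_cone :: "'a::real_inner set \<Rightarrow> 'a \<Rightarrow> 'a set" where
  "normal_cone C xb = {c. \<forall>x\<in>C. c \<bullet> x \<le> c \<bullet> xb}"

definition strictly_complementary :: "'a::euclidean_space set \<Rightarrow> 'a \<Rightarrow> 'a \<Rightarrow> bool" where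
  "strictly_complementary K xb sb \<longleftrightarrow>
     (\<exists>F. F face_of K \<and> xb \<in> rel_interior F \<and> sb \<in> rel_interior (conjugate_face K F))"

definition pointed_cone :: "'a::real_vector set \<Rightarrow> bool" where
  "pointed_cone K \<longleftrightarrow> K \<inter> uminus ` K \<subseteq> {0}"

end

theory Submission
  imports Defs
begin

lemma range_adj:
  fixes A :: "'e::euclidean_space \<Rightarrow> 'f::euclidean_space"
  assumes "linear A" "\<And>l. A l = 0 \<Longrightarrow> w \<bullet> l = 0"
  shows "\<exists>y. w = adjoint A y"
proof -
  have "w \<in> (A -` {0})\<^sup>\<bottom>"
    using assms(2) by (auto simp: orthogonal_comp_def orthogonal_def inner_commute)
  also have "\<dots> = range (adjoint A)"
    using ker_orthogonal_comp_adjoint[OF assms(1)] orthogonal_comp_self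
      linear_subspace_image[OF adjoint_linear[OF assms(1)] subspace_UNIV] by metis
  finally show ?thesis by auto
qed

lemma face_exists:
  fixes F :: "'e::euclidean_space set"
  assumes "F face_of K" "xb \<in> F"
  shows "\<exists>G. G face_of K \<and> xb \<in> rel_interior G"
proof -
  have "\<And>F. nat (aff_dim F + 1) = n \<Longrightarrow> F face_of K \<Longrightarrow> xb \<in> F \<Longrightarrow> \<exists>G. G face_of K \<and> xb \<in> rel_interior G" for n
  proof (induction n rule: less_induct)
    case (less n F)
    show ?case
    proof (cases "xb \<in> rel_interior F")
      case True then show ?thesis using less by blast
    next
      case False
      have cF: "convex F" using less face_of_imp_convex by blast
      have ne: "rel_interior F \<noteq> {}" using cF less(4) rel_interior_eq_empty by blast
      obtain a b where a1: "(xb + a) \<in> affine hull (insert xb (rel_interior F))"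
        and a2: "a \<noteq> 0" "a \<bullet> xb \<le> b" and a3: "\<And>x. x \<in> rel_interior F \<Longrightarrow> a \<bullet> x \<ge> b"
        using separating_hyperplane_set_point_inaff[OF convex_rel_interior[OF cF] ne False] by blast
      have "affine hull (insert xb (rel_interior F)) = affine hull F"
      proof -
        have "xb \<in> affine hull (rel_interior F)"
          using rel_interior_same_affine_hull[OF cF] hull_inc[OF less(4)] by simp
        then show ?thesis using hull_redundant rel_interior_same_affine_hull[OF cF] by metis
      qed
      with a1 have a1': "xb + a \<in> affine hull F" by simp
      have "closure (rel_interior F) \<subseteq> {x. a \<bullet> x \<ge> a \<bullet> xb}"
      proof (rule closure_minimal)
        show "rel_interior F \<subseteq> {x. a \<bullet> x \<ge> a \<bullet> xb}"
        proof
          fix x assume "x \<in> rel_interior F"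
          then have "b \<le> a \<bullet> x" by (rule a3)
          then show "x \<in> {x. a \<bullet> x \<ge> a \<bullet> xb}" using a2(2) by simp
        qed
      qed (rule closed_halfspace_ge)
      then have ge: "\<And>x. x \<in> F \<Longrightarrow> a \<bullet> x \<ge> a \<bullet> xb"
        using convex_closure_rel_interior[OF cF] closure_subset by blast
      define F' where "F' = F \<inter> {x. a \<bullet> x = a \<bullet> xb}"
      have f1: "F' face_of F" unfolding F'_def
        by (rule face_of_Int_supporting_hyperplane_ge[OF cF]) (use ge in auto)
      have "F' \<noteq> F"
      proof
        assume "F' = F"
        then have "F \<subseteq> {x. a \<bullet> x = a \<bullet> xb}" unfolding F'_def by blast
        then have "affine hull F \<subseteq> {x. a \<bullet> x = a \<bullet> xb}"
          by (intro hull_minimal) (auto simp: affine_hyperplane)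
        with a1' have "a \<bullet> (xb + a) = a \<bullet> xb" by blast
        then show False using a2 by (simp add: inner_add_right)
      qed
      then have "aff_dim F' < aff_dim F" using face_of_aff_dim_lt[OF cF f1] by blast
      moreover have "aff_dim F' \<ge> -1" by (rule aff_dim_geq)
      ultimately have "nat (aff_dim F' + 1) < n" using less(2) by linarith
      moreover have "F' face_of K" using f1 less(3) face_of_trans by blast
      moreover have "xb \<in> F'" using less(4) unfolding F'_def by simp
      ultimately show ?thesis using less(1) by blast
    qed
  qed
  then show ?thesis using assms by blast
qed

lemma conj_face_eq:
  fixes K :: "'e::euclidean_space set"
  assumes "F face_of K" "xb \<in> rel_interior F"
  shows "conjugate_face K F = dual_cone K \<inter> {s. s \<bullet> xb = 0}"
proof
  have "xb \<in> F" using assms(2) rel_interior_subset by blast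
  then show "conjugate_face K F \<subseteq> dual_cone K \<inter> {s. s \<bullet> xb = 0}"
    by (auto simp: conjugate_face_def)
next
  have cF: "convex F" using assms face_of_imp_convex by blast
  have ne: "F \<noteq> {}" using assms(2) rel_interior_subset by blast
  show "dual_cone K \<inter> {s. s \<bullet> xb = 0} \<subseteq> conjugate_face K F"
  proof (clarsimp simp: conjugate_face_def)
    fix s x assume s: "s \<in> dual_cone K" "s \<bullet> xb = 0" and x: "x \<in> F"
    obtain e where e: "e > 1" "(1 - e) *\<^sub>R x + e *\<^sub>R xb \<in> F"
      using assms(2) convex_rel_interior_iff[OF cF ne] x by blast
    have FK: "F \<subseteq> K" using assms(1) face_of_imp_subset by blast
    have "s \<bullet> ((1 - e) *\<^sub>R x + e *\<^sub>R xb) \<ge> 0" using s(1) e FK by (auto simp: dual_cone_def)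
    then have "(1 - e) * (s \<bullet> x) \<ge> 0" using s(2) by (simp add: inner_add_right)
    moreover have "s \<bullet> x \<ge> 0" using s(1) x FK by (auto simp: dual_cone_def)
    moreover have "s \<bullet> x \<le> 0"
      using \<open>(1 - e) * (s \<bullet> x) \<ge> 0\<close> e(1) by (simp add: zero_le_mult_iff)
    ultimately show "s \<bullet> x = 0" by linarith
  qed
qed


lemma key:
  fixes K :: "'e::euclidean_space set" and A :: "'e \<Rightarrow> 'f::euclidean_space"
  assumes cone: "convex_cone K" and lin: "linear A"
    and x0: "x0 \<in> interior K" "A x0 = b" and xb: "xb \<in> K" "A xb = b"
    and cN: "c \<in> normal_cone {x\<in>K. A x = b} xb"
  shows "\<exists>y s. s \<in> dual_cone K \<and> s \<bullet> xb = 0 \<and> c = adjoint A y - s"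
proof (cases "\<forall>l. A l = 0 \<longrightarrow> c \<bullet> l = 0")
  case True
  then obtain y where "c = adjoint A y" using range_adj[OF lin] by blast
  then show ?thesis by (intro exI[of _ y] exI[of _ 0]) (auto simp: dual_cone_def)
next
  case False
  then obtain l0 where l0: "A l0 = 0" "c \<bullet> l0 \<noteq> 0" by blast
  define d where "d = l0 /\<^sub>R (c \<bullet> l0)"
  have d: "A d = 0" "c \<bullet> d = 1" using l0 lin by (auto simp: d_def linear_scale)
  have cvK: "convex K" using cone by (simp add: convex_cone_def)
  have Apl: "A (xb + l) = b" if "A l = 0" for l using that xb lin by (simp add: linear_add)
  define T where "T = {x. A x = b} \<inter> {x. c \<bullet> x > c \<bullet> xb}"
  have cT: "convex T" unfolding T_def
  proof (rule convex_Int)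
    have "{x. A x = b} = A -` {b}" by auto
    then show "convex {x. A x = b}" using convex_linear_vimage[OF lin convex_singleton] by metis
  qed (rule convex_halfspace_gt)
  have inT: "xb + l \<in> T" if "A l = 0" "c \<bullet> l > 0" for l
    using Apl[OF that(1)] that(2) by (simp add: T_def inner_add_right)
  have Tne: "T \<noteq> {}" using inT[of d] d by auto
  have dis: "T \<inter> interior K = {}"
  proof (rule ccontr)
    assume "T \<inter> interior K \<noteq> {}"
    then obtain x where "x \<in> T" "x \<in> K" using interior_subset by blast
    then show False using cN by (auto simp: T_def normal_cone_def)
  qed
  obtain a \<beta> where a: "a \<noteq> 0" and aT: "\<And>x. x \<in> T \<Longrightarrow> a \<bullet> x \<le> \<beta>"
    and aK: "\<And>x. x \<in> interior K \<Longrightarrow> a \<bullet> x \<ge> \<beta>"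
    using separating_hyperplane_sets[OF cT convex_interior[OF cvK] Tne _ dis] x0 by blast
  define lam where "lam = a \<bullet> d"
  have c1: "a \<bullet> l = 0" if "A l = 0" "c \<bullet> l = 0" for l
  proof (rule ccontr)
    assume ne: "a \<bullet> l \<noteq> 0"
    define t where "t = (\<beta> - a \<bullet> xb - a \<bullet> d + 1) / (a \<bullet> l)"
    have "A (t *\<^sub>R l + d) = 0" using that d lin by (simp add: linear_add linear_scale)
    moreover have "c \<bullet> (t *\<^sub>R l + d) > 0" using that d by (simp add: inner_add_right)
    ultimately have "a \<bullet> (xb + (t *\<^sub>R l + d)) \<le> \<beta>" using aT inT by blast
    moreover have "a \<bullet> (xb + (t *\<^sub>R l + d)) = \<beta> + 1"
      using ne by (simp add: inner_add_right t_def)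
    ultimately show False by simp
  qed
  have c2: "a \<bullet> l = lam * (c \<bullet> l)" if "A l = 0" for l
  proof -
    have "A (l - (c \<bullet> l) *\<^sub>R d) = 0" using that d lin by (simp add: linear_diff linear_scale)
    moreover have "c \<bullet> (l - (c \<bullet> l) *\<^sub>R d) = 0" using d by (simp add: inner_diff_right)
    ultimately have "a \<bullet> (l - (c \<bullet> l) *\<^sub>R d) = 0" by (rule c1)
    then show ?thesis by (simp add: inner_diff_right lam_def)
  qed
  have c3: "a \<bullet> xb + t * lam \<le> \<beta>" if "t > 0" for t
  proof -
    have "A (t *\<^sub>R d) = 0" using d lin by (simp add: linear_scale)
    moreover have "c \<bullet> (t *\<^sub>R d) > 0" using d that by simp
    ultimately have "a \<bullet> (xb + t *\<^sub>R d) \<le> \<beta>" using aT inT by blast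
    then show ?thesis by (simp add: inner_add_right lam_def)
  qed
  have lam_le: "lam \<le> 0"
  proof (rule ccontr)
    assume "\<not> lam \<le> 0"
    then have lp: "lam > 0" by simp
    define t where "t = (\<bar>\<beta> - a \<bullet> xb\<bar> + 1) / lam"
    have "t > 0" using lp by (simp add: t_def add_pos_nonneg)
    from c3[OF this] have "a \<bullet> xb + \<bar>\<beta> - a \<bullet> xb\<bar> + 1 \<le> \<beta>" using lp by (simp add: t_def)
    then show False by linarith
  qed
  have c4: "a \<bullet> xb \<le> a \<bullet> x" if "x \<in> interior K" for x
  proof (rule ccontr)
    assume "\<not> a \<bullet> xb \<le> a \<bullet> x"
    then have g: "a \<bullet> xb > a \<bullet> x" by simp
    show False
    proof (cases "lam = 0")
      case True
      then show False using c3[of 1] aK[OF that] g by simp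
    next
      case False
      with lam_le have ln: "lam < 0" by simp
      define t where "t = (a \<bullet> xb - a \<bullet> x) / (2 * (- lam))"
      have tp: "t > 0" unfolding t_def using g ln by (intro divide_pos_pos) auto
      have "t * lam = - (a \<bullet> xb - a \<bullet> x) / 2" using ln by (simp add: t_def field_simps)
      then show False using c3[OF tp] aK[OF that] g by (simp add: field_simps)
    qed
  qed
  have c5: "a \<bullet> xb \<le> a \<bullet> x" if "x \<in> K" for x
  proof -
    have "closure (interior K) \<subseteq> {x. a \<bullet> x \<ge> a \<bullet> xb}"
      by (rule closure_minimal) (use c4 in \<open>auto intro: closed_halfspace_ge\<close>)
    moreover have "K \<subseteq> closure (interior K)"
      using convex_closure_interior[OF cvK] x0 closure_subset by blast
    ultimately show ?thesis using that by blast
  qed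
  have lam_ne: "lam \<noteq> 0"
  proof
    assume l: "lam = 0"
    have "A (x0 - xb) = 0" using x0 xb lin by (simp add: linear_diff)
    then have "a \<bullet> (x0 - xb) = 0" using c2 l by simp
    then have eq: "a \<bullet> x0 = a \<bullet> xb" by (simp add: inner_diff_right)
    obtain e where e: "e > 0" "ball x0 e \<subseteq> K" using x0(1) mem_interior by blast
    define p where "p = x0 - (e / (2 * norm a)) *\<^sub>R a"
    have "dist x0 p = e / 2" using a e by (simp add: p_def dist_norm)
    then have "p \<in> K" using e by auto
    moreover have "a \<bullet> p = a \<bullet> x0 - e * norm a / 2"
      using a by (simp add: p_def inner_diff_right power2_norm_eq_inner[symmetric] power2_eq_square)
    moreover have "e * norm a > 0" using e a by simp
    ultimately show False using c5[of p] eq by linarith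
  qed
  have axb: "a \<bullet> xb = 0"
  proof -
    have "0 \<in> K" using cone convex_cone_contains_0 by blast
    moreover have "2 *\<^sub>R xb \<in> K" using cone xb convex_cone_scaleR by fastforce
    ultimately show ?thesis using c5[of 0] c5[of "2 *\<^sub>R xb"] by simp
  qed
  define w where "w = a - lam *\<^sub>R c"
  have "w \<bullet> l = 0" if "A l = 0" for l using c2[OF that] by (simp add: w_def inner_diff_left)
  then obtain y0 where y0: "w = adjoint A y0" using range_adj[OF lin] by blast
  define s where "s = - ((1 / lam) *\<^sub>R a)"
  have ln: "lam < 0" using lam_le lam_ne by simp
  have "s \<in> dual_cone K"
  proof -
    have "s \<bullet> x \<ge> 0" if "x \<in> K" for x
    proof -
      have "a \<bullet> x \<ge> 0" using c5[OF that] axb by simp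
      then show ?thesis using ln by (simp add: s_def divide_nonneg_neg)
    qed
    then show ?thesis by (simp add: dual_cone_def)
  qed
  moreover have "s \<bullet> xb = 0" using axb by (simp add: s_def)
  moreover have "c = adjoint A (- ((1/lam) *\<^sub>R y0)) - s"
  proof -
    have la: "linear (adjoint A)" by (rule adjoint_linear[OF lin])
    have "adjoint A (- ((1/lam) *\<^sub>R y0)) = - ((1/lam) *\<^sub>R w)"
      using la y0 by (simp add: linear_neg linear_scale)
    then show ?thesis using ln by (simp add: s_def w_def algebra_simps)
  qed
  ultimately show ?thesis by blast
qed


theorem proposition4p1:
  fixes K :: "'e::euclidean_space set"
    and A :: "'e \<Rightarrow> 'f::euclidean_space"
    and c :: 'e and b :: 'f and xb :: 'e
  assumes "convex_cone K" and "closed K" and "pointed_cone K" and "interior K \<noteq> {}"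
    and "linear A"
    and "{x\<in>K. A x = b} \<inter> interior K \<noteq> {}"
    and "xb \<in> {x\<in>K. A x = b}"
  shows "(\<exists>sb\<in>{s\<in>dual_cone K. s \<in> (\<lambda>y. adjoint A y - c) ` UNIV}.
            strictly_complementary K xb sb)
         \<longleftrightarrow> c \<in> rel_interior (normal_cone {x\<in>K. A x = b} xb)"
proof -
  note lin = assms(5)
  obtain x0 where x0: "x0 \<in> interior K" "A x0 = b" using assms(6) by blast
  have xb: "xb \<in> K" "A xb = b" using assms(7) by auto
  have cvK: "convex K" using assms(1) by (simp add: convex_cone_def)
  define G where "G = dual_cone K \<inter> {s. s \<bullet> xb = 0}"
  have cG: "convex G"
    unfolding G_def convex_def dual_cone_def
    by (auto simp: inner_add_left intro!: add_nonneg_nonneg mult_nonneg_nonneg)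
  define R where "R = range (adjoint A)"
  have aR: "affine R" unfolding R_def
    by (rule subspace_imp_affine[OF linear_subspace_image[OF adjoint_linear[OF lin] subspace_UNIV]])
  have N: "normal_cone {x\<in>K. A x = b} xb = R + uminus ` G"
  proof
    show "normal_cone {x\<in>K. A x = b} xb \<subseteq> R + uminus ` G"
    proof
      fix c assume "c \<in> normal_cone {x\<in>K. A x = b} xb"
      then obtain y s where "s \<in> dual_cone K" "s \<bullet> xb = 0" "c = adjoint A y - s"
        using key[OF assms(1) lin x0 xb] by blast
      then show "c \<in> R + uminus ` G"
      proof -
        have "adjoint A y \<in> R" "- s \<in> uminus ` G" using \<open>s \<in> dual_cone K\<close> \<open>s \<bullet> xb = 0\<close>
          unfolding R_def G_def by auto
        then have "adjoint A y + - s \<in> R + uminus ` G" by (rule set_plus_intro)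
        then show ?thesis using \<open>c = adjoint A y - s\<close> by simp
      qed
    qed
  next
    show "R + uminus ` G \<subseteq> normal_cone {x\<in>K. A x = b} xb"
    proof
      fix c assume "c \<in> R + uminus ` G"
      then obtain y s where ys: "s \<in> G" "c = adjoint A y - s"
        unfolding R_def by (auto elim!: set_plus_elim)
      show "c \<in> normal_cone {x\<in>K. A x = b} xb"
        unfolding normal_cone_def mem_Collect_eq
      proof (intro ballI)
        fix x assume "x \<in> {x\<in>K. A x = b}"
        then have x: "x \<in> K" "A x = b" by auto
        have e1: "c \<bullet> x = A x \<bullet> y - s \<bullet> x" using ys adjoint_works[OF lin, of x y]
          by (simp add: inner_diff_left inner_diff_right inner_commute)
        have e2: "c \<bullet> xb = A xb \<bullet> y - s \<bullet> xb" using ys adjoint_works[OF lin, of xb y]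
          by (simp add: inner_diff_left inner_diff_right inner_commute)
        have "s \<bullet> x \<ge> 0" "s \<bullet> xb = 0" using ys x unfolding G_def dual_cone_def by auto
        then show "c \<bullet> x \<le> c \<bullet> xb" using e1 e2 x xb by simp
      qed
    qed
  qed
  have bl: "bounded_linear (uminus :: 'e \<Rightarrow> 'e)"
    using bounded_linear_minus[OF bounded_linear_ident] by (simp add: fun_eq_iff)
  have cnG: "convex (uminus ` G)" using cG by (simp add: convex_negations)
  have RI: "rel_interior (normal_cone {x\<in>K. A x = b} xb) = R + uminus ` rel_interior G"
    unfolding N
    using rel_interior_sum[OF affine_imp_convex[OF aR] cnG] rel_interior_affine[OF aR]
      rel_interior_injective_linear_image[OF bl, of G] by (simp add: inj_def)
  have CF: "conjugate_face K F = G" if "F face_of K" "xb \<in> rel_interior F" for F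
    using conj_face_eq[OF that] G_def by simp
  show ?thesis
  proof
    assume "\<exists>sb\<in>{s\<in>dual_cone K. s \<in> (\<lambda>y. adjoint A y - c) ` UNIV}. strictly_complementary K xb sb"
    then obtain sb y F where "sb = adjoint A y - c" "F face_of K" "xb \<in> rel_interior F"
      "sb \<in> rel_interior (conjugate_face K F)"
      unfolding strictly_complementary_def by blast
    then have "sb \<in> rel_interior G" "c = adjoint A y + - sb" using CF by auto
    then show "c \<in> rel_interior (normal_cone {x\<in>K. A x = b} xb)"
      unfolding RI R_def using set_plus_intro[of "adjoint A y" "range (adjoint A)" "- sb" "uminus ` rel_interior G"]
      by auto
  next
    assume "c \<in> rel_interior (normal_cone {x\<in>K. A x = b} xb)"
    then obtain y s where ys: "s \<in> rel_interior G" "c = adjoint A y + - s"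
      unfolding RI R_def by (auto elim!: set_plus_elim)
    obtain F where F: "F face_of K" "xb \<in> rel_interior F"
      using face_exists[OF face_of_refl[OF cvK] xb(1)] by blast
    have "s \<in> G" using ys rel_interior_subset by blast
    then have "s \<in> {s\<in>dual_cone K. s \<in> (\<lambda>y. adjoint A y - c) ` UNIV}"
      using ys unfolding G_def by (auto intro!: image_eqI[of _ _ y])
    moreover have "strictly_complementary K xb s"
      unfolding strictly_complementary_def using F ys CF by blast
    ultimately show "\<exists>sb\<in>{s\<in>dual_cone K. s \<in> (\<lambda>y. adjoint A y - c) ` UNIV}. strictly_complementary K xb sb"
      by blast
  qed
qed

end
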